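(* Let $(x_i(t),v_i(t))_{i=1}^N$ follow the sticky particle Cucker–Smale dynamics associated with data $(x_i^0,v_i^0,m_i)_{i=1}^N$, where $\sum_{i=1}^N m_i=1$. Define $\psi_i^0:=v_i^0+\sum_{j=1}^N m_j\omega(x_i^0-x_j^0)$, $\underline\psi:=\min_{1\le j\le N}\psi_j^0$, $\bar\psi:=\max_{1\le j\le N}\psi_j^0$, and $\psi_i(t):=v_i(t)+\sum_{j=1}^N m_j\,\omega(x_i(t)-x_j(t))$. Then for all $i=1,\dots,N$ and all $t\ge0$: $$\psi_i(t)\in[\underline\psi,\bar\psi],\qquad \underline\psi-\|\omega\|_{L^\infty(\mathbb{R})}\le v_i(t)\le\bar\psi.$$ Consequently, if $\{x_i^0\}_{i=1}^N\subset[-R^0,R^0]$, then $\{x_i(t)\}_{i=1}^N\subset[-R(t),R(t)]$ for all $t\ge0$, where $R(t):=R^0+t\tilde M$ and $\tilde M:=\max\{|\underline\psi-\|\omega\|_{L^\infty(\mathbb{R})}|,\,|\bar\psi|\}$.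
   Context: Standing assumption (H): $\omega:\mathbb{R}\to[0,+\infty)$, $\omega\in W^{1,1}(\mathbb{R})\cap W^{1,\infty}(\mathbb{R})$, $\int_{\mathbb{R}}\omega\,dx=1$, and $\phi:=\omega'\in L^1(\mathbb{R})\cap L^\infty(\mathbb{R})$. Sticky particle Cucker–Smale dynamics: given $N\in\mathbb{N}$, masses $m_1,\dots,m_N>0$ with $\sum_i m_i=1$, initial positions $x_1^0\le\dots\le x_N^0$ and initial velocities $v_1^0,\dots,v_N^0$, the trajectories $(x_i(t),v_i(t))$, $t\ge0$, have continuous positions with $x_1(t)\le\dots\le x_N(t)$. Let $J_i(t):=\{j\in\{1,\dots,N\}: x_j(t)=x_i(t)\}$; particles that meet stick together, i.e. $J_i(t)\subseteq J_i(s)$ for $0\le t\le s$. A collision time is a time at which two or more particles that were apart come to have the same position for the first time. At times $t$ that are not collision times, $\dot x_i=v_i$ and $\dot v_i=\sum_{j=1}^N m_j\phi(x_i-x_j)(v_j-v_i)$. At a collision time $t$, the particles in $J_i(t)$ continue with the common velocity $v_i(t+)=\frac{\sum_{j\in J_i(t)}m_jv_j(t-)}{\sum_{j\in J_i(t)}m_j}$. *)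

theory Defs
  imports "HOL-Analysis.Analysis" "HOL-Probability.Essential_Supremum"
begin

text \<open>Particles are indexed by 0..N-1 (the paper uses 1..N).\<close>

definition Linf_norm :: "(real \<Rightarrow> real) \<Rightarrow> real" where
  "Linf_norm f = real_of_ereal (esssup lborel (\<lambda>y. ereal \<bar>f y\<bar>))"

definition cluster :: "nat \<Rightarrow> (nat \<Rightarrow> real \<Rightarrow> real) \<Rightarrow> nat \<Rightarrow> real \<Rightarrow> nat set" where
  "cluster N x i t = {j. j < N \<and> x j t = x i t}"

definition collision_time :: "nat \<Rightarrow> (nat \<Rightarrow> real \<Rightarrow> real) \<Rightarrow> real \<Rightarrow> bool" where
  "collision_time N x t \<longleftrightarrow> t > 0 \<and>
     (\<exists>i<N. \<exists>j<N. x i t = x j t \<and> (\<forall>s. 0 \<le> s \<and> s < t \<longrightarrow> x i s \<noteq> x j s))"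

text \<open>Convention: at a collision time t the velocity v_i(t) is the post-collision
  velocity v_i(t+), i.e. v_i is right-continuous there.\<close>
definition sticky_CS ::
  "(real \<Rightarrow> real) \<Rightarrow> nat \<Rightarrow> (nat \<Rightarrow> real) \<Rightarrow> (nat \<Rightarrow> real) \<Rightarrow> (nat \<Rightarrow> real)
     \<Rightarrow> (nat \<Rightarrow> real \<Rightarrow> real) \<Rightarrow> (nat \<Rightarrow> real \<Rightarrow> real) \<Rightarrow> bool" where
  "sticky_CS \<phi> N m x0 v0 x v \<longleftrightarrow>
     (\<forall>i<N. x i 0 = x0 i \<and> v i 0 = v0 i) \<and>
     (\<forall>i<N. continuous_on {0..} (x i)) \<and>
     (\<forall>t\<ge>0. \<forall>i. Suc i < N \<longrightarrow> x i t \<le> x (Suc i) t) \<and>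
     (\<forall>i<N. \<forall>t s. 0 \<le> t \<and> t \<le> s \<longrightarrow> cluster N x i t \<subseteq> cluster N x i s) \<and>
     (\<forall>t\<ge>0. \<not> collision_time N x t \<longrightarrow>
        (\<forall>i<N. (x i has_real_derivative v i t) (at t within {0..}) \<and>
               (v i has_real_derivative
                  (\<Sum>j<N. m j * \<phi> (x i t - x j t) * (v j t - v i t))) (at t within {0..}))) \<and>
     (\<forall>t. collision_time N x t \<longrightarrow>
        (\<exists>l. (\<forall>j<N. (v j \<longlongrightarrow> l j) (at_left t)) \<and>
             (\<forall>i<N. v i t = (\<Sum>j\<in>cluster N x i t. m j * l j) / (\<Sum>j\<in>cluster N x i t. m j) \<and>
                    (v i \<longlongrightarrow> v i t) (at_right t))))"

end

theory Submission
  imports Defs "HOL-Analysis.Analysis"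
begin

lemma lip_from_int:
  fixes \<phi> \<omega> :: "real \<Rightarrow> real"
  assumes \<phi>B: "\<And>z. \<bar>\<phi> z\<bar> \<le> B"
    and \<omega>\<phi>: "\<And>a b. a \<le> b \<Longrightarrow> (\<phi> has_integral \<omega> b - \<omega> a) {a..b}"
  shows "\<bar>\<omega> b - \<omega> a\<bar> \<le> B * \<bar>b - a\<bar>"
proof -
  have B0: "0 \<le> B" using \<phi>B[of 0] by linarith
  show ?thesis
  proof (cases "a \<le> b")
    case True
    have "norm (\<omega> b - \<omega> a) \<le> B * Henstock_Kurzweil_Integration.content {a..b}"
      by (rule has_integral_bound_real[OF B0 finite.emptyI \<omega>\<phi>[OF True]]) (use \<phi>B in auto)
    then show ?thesis using True by simp
  next
    case False
    have "norm (\<omega> a - \<omega> b) \<le> B * Henstock_Kurzweil_Integration.content {b..a}"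
      by (rule has_integral_bound_real[OF B0 finite.emptyI \<omega>\<phi>]) (use \<phi>B False in auto)
    then show ?thesis using False by (simp add: abs_minus_commute)
  qed
qed

lemma lip_cont:
  fixes \<omega> :: "real \<Rightarrow> real"
  assumes "\<And>a b. \<bar>\<omega> b - \<omega> a\<bar> \<le> B * \<bar>b - a\<bar>"
  shows "continuous_on UNIV \<omega>"
proof (rule lipschitz_on_continuous_on)
  have "0 \<le> B" using assms[of 0 1] by simp
  then show "B-lipschitz_on UNIV \<omega>"
    unfolding lipschitz_on_def dist_real_def using assms by auto
qed

lemma deriv0_comp:
  fixes y \<omega> :: "real \<Rightarrow> real"
  assumes y: "(y has_real_derivative 0) (at z within S)"
    and lip: "\<And>a b. \<bar>\<omega> b - \<omega> a\<bar> \<le> B * \<bar>b - a\<bar>"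
  shows "((\<lambda>w. \<omega> (y w)) has_real_derivative 0) (at z within S)"
proof -
  have t: "((\<lambda>w. (y w - y z) / (w - z)) \<longlongrightarrow> 0) (at z within S)"
    using y by (simp add: has_field_derivative_iff)
  have "((\<lambda>w. B * \<bar>(y w - y z) / (w - z)\<bar>) \<longlongrightarrow> B * \<bar>0\<bar>) (at z within S)"
    by (intro tendsto_intros t)
  then have t2: "((\<lambda>w. B * \<bar>(y w - y z) / (w - z)\<bar>) \<longlongrightarrow> 0) (at z within S)" by simp
  have "((\<lambda>w. (\<omega> (y w) - \<omega> (y z)) / (w - z)) \<longlongrightarrow> 0) (at z within S)"
  proof (rule Lim_null_comparison[OF _ t2])
    show "\<forall>\<^sub>F w in at z within S. norm ((\<omega> (y w) - \<omega> (y z)) / (w - z)) \<le> B * \<bar>(y w - y z) / (w - z)\<bar>"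
    proof (rule always_eventually, rule allI)
      fix w
      have "\<bar>\<omega> (y w) - \<omega> (y z)\<bar> / \<bar>w - z\<bar> \<le> B * \<bar>y w - y z\<bar> / \<bar>w - z\<bar>"
        using lip[where a="y z" and b="y w"] by (intro divide_right_mono) auto
      then show "norm ((\<omega> (y w) - \<omega> (y z)) / (w - z)) \<le> B * \<bar>(y w - y z) / (w - z)\<bar>"
        by (simp add: abs_divide)
    qed
  qed
  then show ?thesis by (simp add: has_field_derivative_iff)
qed

lemma subst_piece:
  fixes y y' \<phi> \<omega> :: "real \<Rightarrow> real"
  assumes ab: "a < b"
    and yder: "\<And>\<tau>. \<tau> \<in> {a..b} \<Longrightarrow> (y has_real_derivative y' \<tau>) (at \<tau>)"
    and y'c: "continuous_on {a..b} y'"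
    and nz: "\<And>\<tau>. \<tau> \<in> {a..b} \<Longrightarrow> y' \<tau> \<noteq> 0"
    and \<phi>B: "\<And>z. \<bar>\<phi> z\<bar> \<le> B"
    and \<omega>\<phi>: "\<And>a b. a \<le> b \<Longrightarrow> (\<phi> has_integral \<omega> b - \<omega> a) {a..b}"
  shows "integral {a..b} (\<lambda>\<tau>. \<phi> (y \<tau>) * y' \<tau>) = \<omega> (y b) - \<omega> (y a)"
proof -
  have yc: "continuous_on {a..b} y"
    by (rule DERIV_continuous_on) (use yder has_field_derivative_at_within in blast)
  have yc': "continuous_on {u..u'} y" if "a \<le> u" "u' \<le> b" for u u'
    using continuous_on_subset[OF yc] that by auto
  have sign: "(\<forall>\<tau>\<in>{a..b}. y' \<tau> > 0) \<or> (\<forall>\<tau>\<in>{a..b}. y' \<tau> < 0)"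
  proof (rule ccontr)
    assume "\<not> ?thesis"
    then obtain p q where pq: "p \<in> {a..b}" "q \<in> {a..b}" "y' p \<le> 0" "y' q \<ge> 0"
      by (meson not_less)
    have cpq: "continuous_on {min p q..max p q} y'"
      using continuous_on_subset[OF y'c] pq by auto
    have "\<exists>s\<ge>min p q. s \<le> max p q \<and> y' s = 0"
    proof (cases "p \<le> q")
      case True
      then show ?thesis using IVT'[of y' p 0 q] cpq pq by auto
    next
      case False
      then show ?thesis using IVT2'[of y' p 0 q] cpq pq by auto
    qed
    then obtain s where s: "min p q \<le> s" "s \<le> max p q" "y' s = 0" by blast
    have "s \<in> {a..b}" using s pq by (auto simp: min_def max_def split: if_splits)
    then show False using nz s by blast
  qed
  have inj: "inj_on y {a..b}"
  proof (rule linorder_inj_onI)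
    fix u u' assume uu: "u < u'" "u \<in> {a..b}" "u' \<in> {a..b}"
    show "y u \<noteq> y u'"
    proof
      assume eq: "y u = y u'"
      have "\<exists>z>u. z < u' \<and> (y has_real_derivative 0) (at z)"
        by (rule Rolle[OF uu(1) eq]) (use yc' uu in auto, metis (no_types, lifting) atLeastAtMost_iff dual_order.trans less_imp_le real_differentiable_def uu(2,3) yder)
      then obtain z where z: "u < z" "z < u'" "(y has_real_derivative 0) (at z)" by blast
      have "z \<in> {a..b}" using z uu by auto
      then have "y' z = 0" using DERIV_unique[OF yder z(3)] by simp
      then show False using nz \<open>z \<in> {a..b}\<close> by blast
    qed
  qed auto
  have cov: "(\<lambda>x. \<bar>y' x\<bar> * \<phi> (y x)) absolutely_integrable_on {a..b} \<and>
           integral {a..b} (\<lambda>x. \<bar>y' x\<bar> * \<phi> (y x)) = r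
     \<longleftrightarrow> \<phi> absolutely_integrable_on (y ` {a..b}) \<and> integral (y ` {a..b}) \<phi> = r" for r
    by (rule has_absolute_integral_change_of_variables_1')
       (use inj in \<open>simp_all add: has_field_derivative_at_within yder\<close>)
  have absint: "\<phi> absolutely_integrable_on {p..q}" if "p \<le> q" for p q
    by (rule absolutely_integrable_integrable_bound[where g="\<lambda>_. B"])
       (use \<phi>B \<omega>\<phi>[OF that] in auto)
  from sign show ?thesis
  proof
    assume pos: "\<forall>\<tau>\<in>{a..b}. y' \<tau> > 0"
    have mono: "y u \<le> y u'" if "a \<le> u" "u \<le> u'" "u' \<le> b" for u u'
      by (rule DERIV_nonneg_imp_increasing_open[OF that(2) _ yc'[OF that(1,3)]])
         (use that in \<open>meson atLeastAtMost_iff less_imp_le order_trans yder pos\<close>)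
    have img: "y ` {a..b} = {y a..y b}"
    proof
      show "y ` {a..b} \<subseteq> {y a..y b}" using mono by auto
      show "{y a..y b} \<subseteq> y ` {a..b}"
      proof
        fix w assume "w \<in> {y a..y b}"
        then obtain s where "s \<ge> a" "s \<le> b" "y s = w" using IVT'[of y a w b] yc ab by auto
        then show "w \<in> y ` {a..b}" by auto
      qed
    qed
    have yab: "y a \<le> y b" using mono ab by auto
    have "integral {a..b} (\<lambda>x. \<bar>y' x\<bar> * \<phi> (y x)) = \<omega> (y b) - \<omega> (y a)"
    proof -
      have "\<phi> absolutely_integrable_on (y ` {a..b}) \<and> integral (y ` {a..b}) \<phi> = \<omega> (y b) - \<omega> (y a)"
        unfolding img using absint[OF yab] integral_unique[OF \<omega>\<phi>[OF yab]] by blast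
      then show ?thesis using cov by blast
    qed
    moreover have "integral {a..b} (\<lambda>x. \<bar>y' x\<bar> * \<phi> (y x)) = integral {a..b} (\<lambda>\<tau>. \<phi> (y \<tau>) * y' \<tau>)"
      by (rule integral_cong) (use pos in \<open>fastforce simp: abs_of_pos\<close>)
    ultimately show ?thesis by simp
  next
    assume neg: "\<forall>\<tau>\<in>{a..b}. y' \<tau> < 0"
    have mono: "y u' \<le> y u" if "a \<le> u" "u \<le> u'" "u' \<le> b" for u u'
      by (rule DERIV_nonpos_imp_decreasing_open[OF that(2) _ yc'[OF that(1,3)]])
         (use that in \<open>meson atLeastAtMost_iff less_imp_le order_trans yder neg\<close>)
    have img: "y ` {a..b} = {y b..y a}"
    proof
      show "y ` {a..b} \<subseteq> {y b..y a}" using mono by auto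
      show "{y b..y a} \<subseteq> y ` {a..b}"
      proof
        fix w assume "w \<in> {y b..y a}"
        then obtain s where "s \<ge> a" "s \<le> b" "y s = w" using IVT2'[of y b w a] yc ab by auto
        then show "w \<in> y ` {a..b}" by auto
      qed
    qed
    have yab: "y b \<le> y a" using mono ab by auto
    have "integral {a..b} (\<lambda>x. \<bar>y' x\<bar> * \<phi> (y x)) = \<omega> (y a) - \<omega> (y b)"
    proof -
      have "\<phi> absolutely_integrable_on (y ` {a..b}) \<and> integral (y ` {a..b}) \<phi> = \<omega> (y a) - \<omega> (y b)"
        unfolding img using absint[OF yab] integral_unique[OF \<omega>\<phi>[OF yab]] by blast
      then show ?thesis using cov by blast
    qed
    moreover have "integral {a..b} (\<lambda>x. \<bar>y' x\<bar> * \<phi> (y x)) = integral {a..b} (\<lambda>\<tau>. - (\<phi> (y \<tau>) * y' \<tau>))"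
      by (rule integral_cong) (use neg in \<open>fastforce simp: abs_of_neg\<close>)
    moreover have "integral {a..b} (\<lambda>\<tau>. - (\<phi> (y \<tau>) * y' \<tau>)) = - integral {a..b} (\<lambda>\<tau>. \<phi> (y \<tau>) * y' \<tau>)"
      by (rule integral_neg)
    ultimately show ?thesis by simp
  qed
qed

lemma subst_C:
  fixes y y' \<phi> \<omega> :: "real \<Rightarrow> real"
  assumes cd: "c \<le> d"
    and yder: "\<And>\<tau>. \<tau> \<in> {c..d} \<Longrightarrow> (y has_real_derivative y' \<tau>) (at \<tau> within {c..d})"
    and y'c: "continuous_on {c..d} y'"
    and \<phi>m: "\<phi> \<in> borel_measurable borel"
    and \<phi>B: "\<And>z. \<bar>\<phi> z\<bar> \<le> B"
    and \<omega>\<phi>: "\<And>a b. a \<le> b \<Longrightarrow> (\<phi> has_integral \<omega> b - \<omega> a) {a..b}"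
  shows "((\<lambda>\<tau>. \<phi> (y \<tau>) * y' \<tau>) has_integral \<omega> (y d) - \<omega> (y c)) {c..d}"
proof -
  define g where "g = (\<lambda>\<tau>. \<phi> (y \<tau>) * y' \<tau>)"
  have lip: "\<And>a b. \<bar>\<omega> b - \<omega> a\<bar> \<le> B * \<bar>b - a\<bar>" by (rule lip_from_int[OF \<phi>B \<omega>\<phi>])
  have \<omega>c: "continuous_on UNIV \<omega>" by (rule lip_cont[OF lip])
  have B0: "0 \<le> B" using \<phi>B[of 0] by linarith
  have yc: "continuous_on {c..d} y" using yder by (rule DERIV_continuous_on)
  have gint: "g integrable_on {a..b}" if "c \<le> a" "b \<le> d" for a b
  proof -
    have ab: "{a..b} \<subseteq> {c..d}" using that by auto
    have m1: "y \<in> borel_measurable (lebesgue_on {a..b})"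
      by (rule continuous_imp_measurable_on_sets_lebesgue[OF continuous_on_subset[OF yc ab]]) auto
    have m2: "y' \<in> borel_measurable (lebesgue_on {a..b})"
      by (rule continuous_imp_measurable_on_sets_lebesgue[OF continuous_on_subset[OF y'c ab]]) auto
    have m3: "(\<lambda>\<tau>. \<phi> (y \<tau>)) \<in> borel_measurable (lebesgue_on {a..b})"
      using measurable_compose[OF m1 \<phi>m] by (simp add: comp_def)
    have "g \<in> borel_measurable (lebesgue_on {a..b})" unfolding g_def
      by (rule borel_measurable_times[OF m3 m2])
    moreover have "(\<lambda>\<tau>. B * \<bar>y' \<tau>\<bar>) integrable_on {a..b}"
    proof -
      have cy': "continuous_on {a..b} y'" by (rule continuous_on_subset[OF y'c ab])
      show ?thesis by (intro integrable_continuous_real continuous_intros cy')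
    qed
    moreover have "\<bar>g \<tau>\<bar> \<le> B * \<bar>y' \<tau>\<bar>" for \<tau> unfolding g_def
      by (simp add: abs_mult mult_right_mono \<phi>B)
    ultimately show ?thesis by (rule measurable_bounded_by_integrable_imp_integrable_real[where g="\<lambda>\<tau>. B * \<bar>y' \<tau>\<bar>"]) auto
  qed
  define I where "I u = integral {c..u} g" for u
  define H where "H u = \<omega> (y u) - \<omega> (y c) - I u" for u
  show ?thesis
  proof (cases "c = d")
    case True
    then show ?thesis by (simp add: has_integral_refl)
  next
    case False
    then have cd': "c < d" using cd by simp
    have Hd: "H d = H c"
    proof (rule DERIV_isconst_end[OF cd'])
      have "continuous_on {c..d} (\<lambda>u. \<omega> (y u))"
        by (rule continuous_on_compose2[OF \<omega>c yc]) auto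
      moreover have "continuous_on {c..d} I"
        unfolding I_def by (rule indefinite_integral_continuous_1[OF gint]) auto
      ultimately show "continuous_on {c..d} H"
        unfolding H_def by (intro continuous_intros) auto
    next
      fix z assume z: "c < z" "z < d"
      have atz: "at z within {c..d} = at z" using z by (rule at_within_Icc_at)
      have yz: "(y has_real_derivative y' z) (at z)" using yder[of z] z atz by auto
      have y'z: "isCont y' z"
        using y'c z atz by (metis atLeastAtMost_iff continuous_on_eq_continuous_within less_imp_le)
      show "DERIV H z :> 0"
      proof (cases "y' z = 0")
        case True
        have d1: "((\<lambda>w. \<omega> (y w)) has_real_derivative 0) (at z)"
          using deriv0_comp[OF yz[unfolded True] lip] .
        have "(g \<longlongrightarrow> 0) (at z within {c..d})"
        proof (rule Lim_null_comparison)
          show "\<forall>\<^sub>F w in at z within {c..d}. norm (g w) \<le> B * \<bar>y' w\<bar>"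
            by (rule always_eventually) (simp add: g_def abs_mult mult_right_mono \<phi>B)
          have "((\<lambda>w. B * \<bar>y' w\<bar>) \<longlongrightarrow> B * \<bar>y' z\<bar>) (at z)"
            using y'z by (intro tendsto_intros) (simp add: isCont_def)
          then show "((\<lambda>w. B * \<bar>y' w\<bar>) \<longlongrightarrow> 0) (at z within {c..d})"
            using True atz by simp
        qed
        then have gc: "continuous (at z within ({c..d} - {})) g"
          using True by (simp add: continuous_within g_def)
        have "(I has_vector_derivative g z) (at z within ({c..d} - {}))"
          unfolding I_def
          by (rule integral_has_vector_derivative_continuous_at[OF gint[OF order_refl order_refl] _ finite.emptyI gc])
             (use z in auto)
        then have d2: "(I has_real_derivative 0) (at z)"
          using atz True by (simp add: has_real_derivative_iff_has_vector_derivative g_def)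
        have "((\<lambda>u. \<omega> (y u) - \<omega> (y c) - I u) has_real_derivative 0 - 0 - 0) (at z)"
          by (intro DERIV_diff d1 d2 DERIV_const)
        then show ?thesis unfolding H_def by simp
      next
        case False
        obtain \<delta> where \<delta>: "\<delta> > 0" "\<forall>w. dist z w < \<delta> \<longrightarrow> y' w \<noteq> 0"
          using continuous_at_avoid[OF y'z False] by blast
        define r where "r = min \<delta> (min (z - c) (d - z)) / 2"
        have r: "r > 0" "r < \<delta>" "r < z - c" "r < d - z"
          using \<delta>(1) z unfolding r_def by (auto simp: min_def)
        have loc: "H w = H z" if w: "w \<in> ball z r" for w
        proof -
          have key: "H b = H a" if ab: "a < b" "\<bar>a - z\<bar> < r" "\<bar>b - z\<bar> < r" for a b
          proof -
            have inab: "\<bar>\<tau> - z\<bar> < r" if "\<tau> \<in> {a..b}" for \<tau>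
              using that ab by (simp add: abs_less_iff; linarith)
            have ac: "c < a" "b < d" using ab r by (simp_all add: abs_less_iff; linarith)+
            have "integral {a..b} g = \<omega> (y b) - \<omega> (y a)"
              unfolding g_def
            proof (rule subst_piece[OF ab(1) _ _ _ \<phi>B \<omega>\<phi>])
              fix \<tau> assume t: "\<tau> \<in> {a..b}"
              then have ct: "c < \<tau>" "\<tau> < d" using ac by auto
              have "(y has_real_derivative y' \<tau>) (at \<tau> within {c..d})"
                using yder ct by simp
              then show "(y has_real_derivative y' \<tau>) (at \<tau>)"
                using at_within_Icc_at[OF ct] by simp
              have "dist z \<tau> < \<delta>" using inab[OF t] r by (simp add: dist_real_def abs_minus_commute)
              then show "y' \<tau> \<noteq> 0" using \<delta>(2) by blast
            next
              show "continuous_on {a..b} y'"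
                by (rule continuous_on_subset[OF y'c]) (use ac in auto)
            qed
            moreover have "I b = I a + integral {a..b} g"
              unfolding I_def using Henstock_Kurzweil_Integration.integral_combine[of c a b g] gint[of c b] ac ab by simp
            ultimately show ?thesis unfolding H_def by simp
          qed
          have wz: "\<bar>w - z\<bar> < r" using w by (simp add: dist_real_def abs_minus_commute)
          show ?thesis
          proof (cases w z rule: linorder_cases)
            case less then show ?thesis using key[of w z] wz r by simp
          next
            case equal then show ?thesis by simp
          next
            case greater then show ?thesis using key[of z w] wz r by simp
          qed
        qed
        show ?thesis
        proof (rule has_field_derivative_transform_within_open[OF DERIV_const[of "H z"] open_ball])
          show "z \<in> ball z r" using r by simp
          show "\<And>w. w \<in> ball z r \<Longrightarrow> H z = H w" using loc by metis
        qed
      qed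
    qed
    then have "I d = \<omega> (y d) - \<omega> (y c)" by (simp add: H_def I_def)
    then show ?thesis using integrable_integral[OF gint[OF order_refl order_refl]] unfolding I_def g_def by simp
  qed
qed

locale scs =
  fixes \<omega> \<phi> :: "real \<Rightarrow> real" and N :: nat and m x0 v0 :: "nat \<Rightarrow> real"
    and x v :: "nat \<Rightarrow> real \<Rightarrow> real" and B :: real
  assumes phiB: "\<And>z. \<bar>\<phi> z\<bar> \<le> B"
    and phim: "\<phi> \<in> borel_measurable borel"
    and \<omega>\<phi>: "\<And>a b. a \<le> b \<Longrightarrow> (\<phi> has_integral \<omega> b - \<omega> a) {a..b}"
    and m_pos: "\<And>i. i < N \<Longrightarrow> m i > 0"
    and sol: "sticky_CS \<phi> N m x0 v0 x v"
begin

definition psi :: "nat \<Rightarrow> real \<Rightarrow> real" where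
  "psi i t = v i t + (\<Sum>j<N. m j * \<omega> (x i t - x j t))"

lemmas solu = sol[unfolded sticky_CS_def]
lemmas sol1 = conjunct1[OF solu]
lemmas sol2 = conjunct1[OF conjunct2[OF solu]]
lemmas sol5 = conjunct1[OF conjunct2[OF conjunct2[OF conjunct2[OF conjunct2[OF solu]]]]]
lemmas sol6 = conjunct2[OF conjunct2[OF conjunct2[OF conjunct2[OF conjunct2[OF solu]]]]]

lemma init: "i < N \<Longrightarrow> x i 0 = x0 i \<and> v i 0 = v0 i"
  using sol1 by blast

lemma xcont: "i < N \<Longrightarrow> continuous_on {0..} (x i)"
  using sol2 by blast

lemma derivs:
  assumes "t \<ge> 0" "\<not> collision_time N x t" "i < N"
  shows "(x i has_real_derivative v i t) (at t within {0..})"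
    "(v i has_real_derivative (\<Sum>j<N. m j * \<phi> (x i t - x j t) * (v j t - v i t))) (at t within {0..})"
  using sol5 assms by blast+

lemma coll:
  assumes "collision_time N x t"
  shows "\<exists>l. (\<forall>j<N. (v j \<longlongrightarrow> l j) (at_left t)) \<and>
             (\<forall>i<N. v i t = (\<Sum>j\<in>cluster N x i t. m j * l j) / (\<Sum>j\<in>cluster N x i t. m j) \<and>
                    (v i \<longlongrightarrow> v i t) (at_right t))"
  using sol6 assms by blast

lemma lip: "\<bar>\<omega> b - \<omega> a\<bar> \<le> B * \<bar>b - a\<bar>"
  by (rule lip_from_int[OF phiB \<omega>\<phi>])

lemma \<omega>cont: "continuous_on UNIV \<omega>"
  by (rule lip_cont[OF lip])

lemma finite_coll: "finite {t. collision_time N x t}"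
proof -
  let ?C = "{t. collision_time N x t}"
  let ?P = "\<lambda>t p. fst p < N \<and> snd p < N \<and> x (fst p) t = x (snd p) t \<and>
                 (\<forall>s. 0 \<le> s \<and> s < t \<longrightarrow> x (fst p) s \<noteq> x (snd p) s)"
  define pr where "pr t = (SOME p. ?P t p)" for t
  have prP: "?P t (pr t)" if "t \<in> ?C" for t
  proof -
    from that obtain i j where "i < N" "j < N" "x i t = x j t" "\<forall>s. 0 \<le> s \<and> s < t \<longrightarrow> x i s \<noteq> x j s"
      unfolding collision_time_def by blast
    then have "?P t (i, j)" by simp
    then show ?thesis unfolding pr_def by (rule someI)
  qed
  have pos: "t > 0" if "t \<in> ?C" for t using that unfolding collision_time_def by blast
  have "inj_on pr ?C"
  proof (rule linorder_inj_onI)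
    fix t1 t2 assume t: "t1 < t2" "t1 \<in> ?C" "t2 \<in> ?C"
    show "pr t1 \<noteq> pr t2"
    proof
      assume eq: "pr t1 = pr t2"
      have "x (fst (pr t1)) t1 = x (snd (pr t1)) t1" using prP[OF t(2)] by blast
      moreover have "x (fst (pr t2)) t1 \<noteq> x (snd (pr t2)) t1"
        using prP[OF t(3)] t(1) pos[OF t(2)] by auto
      ultimately show False using eq by simp
    qed
  qed auto
  moreover have "pr t \<in> {..<N} \<times> {..<N}" if "t \<in> ?C" for t
    using prP[OF that] by (cases "pr t") auto
  then have "pr ` ?C \<subseteq> {..<N} \<times> {..<N}" by blast
  ultimately show ?thesis by (rule inj_on_finite) auto
qed

lemma const_open:
  assumes p: "0 \<le> p" and nc: "\<And>t. p < t \<Longrightarrow> t < q \<Longrightarrow> \<not> collision_time N x t"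
    and i: "i < N" and cd: "p < c" "c \<le> d" "d < q"
  shows "psi i d = psi i c"
proof -
  have ncd: "\<tau> \<ge> 0 \<and> \<not> collision_time N x \<tau>" if "\<tau> \<in> {c..d}" for \<tau>
    using that p cd nc[of \<tau>] by auto
  have sub: "{c..d} \<subseteq> {0..}" using p cd by auto
  have dx: "(x k has_real_derivative v k \<tau>) (at \<tau> within {c..d})" if "k < N" "\<tau> \<in> {c..d}" for k \<tau>
    using DERIV_subset[OF derivs(1)[OF _ _ that(1)] sub] ncd[OF that(2)] by blast
  define G where "G k \<tau> = (\<Sum>j<N. m j * \<phi> (x k \<tau> - x j \<tau>) * (v j \<tau> - v k \<tau>))" for k \<tau>
  have dv: "(v k has_real_derivative G k \<tau>) (at \<tau> within {c..d})" if "k < N" "\<tau> \<in> {c..d}" for k \<tau>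
    unfolding G_def using DERIV_subset[OF derivs(2)[OF _ _ that(1)] sub] ncd[OF that(2)] by blast
  have vc: "continuous_on {c..d} (v k)" if "k < N" for k
    by (rule DERIV_continuous_on) (rule dv[OF that])
  have hint: "((\<lambda>\<tau>. \<phi> (x i \<tau> - x j \<tau>) * (v i \<tau> - v j \<tau>)) has_integral
                 \<omega> (x i d - x j d) - \<omega> (x i c - x j c)) {c..d}" if j: "j < N" for j
  proof (rule subst_C[OF cd(2) _ _ phim phiB \<omega>\<phi>, where y="\<lambda>\<tau>. x i \<tau> - x j \<tau>" and y'="\<lambda>\<tau>. v i \<tau> - v j \<tau>"])
    show "((\<lambda>\<tau>. x i \<tau> - x j \<tau>) has_real_derivative v i \<tau> - v j \<tau>) (at \<tau> within {c..d})"
      if "\<tau> \<in> {c..d}" for \<tau>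
      by (intro DERIV_diff dx i j that)
    show "continuous_on {c..d} (\<lambda>\<tau>. v i \<tau> - v j \<tau>)"
      by (intro continuous_on_diff vc i j)
  qed
  have ftc: "(G i has_integral v i d - v i c) {c..d}"
    by (rule fundamental_theorem_of_calculus[OF cd(2)])
       (use dv[OF i] in \<open>simp add: has_real_derivative_iff_has_vector_derivative[symmetric]\<close>)
  have "((\<lambda>\<tau>. \<Sum>j<N. (- m j) * (\<phi> (x i \<tau> - x j \<tau>) * (v i \<tau> - v j \<tau>))) has_integral
          (\<Sum>j<N. (- m j) * (\<omega> (x i d - x j d) - \<omega> (x i c - x j c)))) {c..d}"
  proof (rule has_integral_sum)
    fix j assume "j \<in> {..<N}"
    then show "((\<lambda>\<tau>. (- m j) * (\<phi> (x i \<tau> - x j \<tau>) * (v i \<tau> - v j \<tau>))) has_integral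
          (- m j) * (\<omega> (x i d - x j d) - \<omega> (x i c - x j c))) {c..d}"
      by (intro has_integral_mult_right hint) simp
  qed simp
  moreover have "(\<lambda>\<tau>. \<Sum>j<N. (- m j) * (\<phi> (x i \<tau> - x j \<tau>) * (v i \<tau> - v j \<tau>))) = G i"
    unfolding G_def by (rule ext, rule sum.cong) (auto simp: algebra_simps)
  ultimately have "(G i has_integral (\<Sum>j<N. (- m j) * (\<omega> (x i d - x j d) - \<omega> (x i c - x j c)))) {c..d}"
    by simp
  then have "v i d - v i c = (\<Sum>j<N. (- m j) * (\<omega> (x i d - x j d) - \<omega> (x i c - x j c)))"
    by (rule has_integral_unique[OF ftc])
  also have "\<dots> = (\<Sum>j<N. m j * \<omega> (x i c - x j c)) - (\<Sum>j<N. m j * \<omega> (x i d - x j d))"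
    by (simp add: sum_subtractf[symmetric] algebra_simps)
  finally show ?thesis unfolding psi_def by simp
qed

end

context scs
begin

lemma \<omega>isCont: "isCont \<omega> z"
  using \<omega>cont continuous_on_eq_continuous_at open_UNIV by blast

lemma x_right: assumes "p \<ge> 0" "k < N" shows "(x k \<longlongrightarrow> x k p) (at_right p)"
proof -
  have "continuous (at p within {0..}) (x k)"
    using xcont[OF assms(2)] assms(1) continuous_on_eq_continuous_within by blast
  then have "(x k \<longlongrightarrow> x k p) (at p within {0..})" by (simp add: continuous_within)
  then show ?thesis by (rule tendsto_within_subset) (use assms(1) in auto)
qed

lemma x_left: assumes "p > 0" "k < N" shows "(x k \<longlongrightarrow> x k p) (at_left p)"
proof -
  have "isCont (x k) p"
    by (rule continuous_on_interior[OF xcont[OF assms(2)]]) (use assms(1) in simp)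
  then have "(x k \<longlongrightarrow> x k p) (at p)" by (simp add: isCont_def)
  then show ?thesis by (rule tendsto_within_subset) auto
qed

lemma v_right: assumes "p \<ge> 0" "k < N" shows "(v k \<longlongrightarrow> v k p) (at_right p)"
proof (cases "collision_time N x p")
  case True
  then show ?thesis using coll[OF True] assms(2) by blast
next
  case False
  have "continuous (at p within {0..}) (v k)"
    by (rule DERIV_continuous[OF derivs(2)[OF assms(1) False assms(2)]])
  then have "(v k \<longlongrightarrow> v k p) (at p within {0..})" by (simp add: continuous_within)
  then show ?thesis by (rule tendsto_within_subset) (use assms(1) in auto)
qed

lemma sum_tendsto:
  assumes "\<And>j. j < N \<Longrightarrow> (x j \<longlongrightarrow> x j p) F" and that: "k < N"
  shows "((\<lambda>\<tau>. \<Sum>j<N. m j * \<omega> (x k \<tau> - x j \<tau>)) \<longlongrightarrow> (\<Sum>j<N. m j * \<omega> (x k p - x j p))) F"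
proof (rule tendsto_sum)
  fix j assume "j \<in> {..<N}"
  then have "((\<lambda>\<tau>. x k \<tau> - x j \<tau>) \<longlongrightarrow> x k p - x j p) F"
    using assms that by (intro tendsto_diff) auto
  then have "((\<lambda>\<tau>. \<omega> (x k \<tau> - x j \<tau>)) \<longlongrightarrow> \<omega> (x k p - x j p)) F"
    by (rule isCont_tendsto_compose[OF \<omega>isCont])
  then show "((\<lambda>\<tau>. m j * \<omega> (x k \<tau> - x j \<tau>)) \<longlongrightarrow> m j * \<omega> (x k p - x j p)) F"
    by (rule tendsto_mult_left)
qed

lemma psi_right: assumes "p \<ge> 0" "i < N" shows "(psi i \<longlongrightarrow> psi i p) (at_right p)"
proof -
  have "((\<lambda>\<tau>. v i \<tau> + (\<Sum>j<N. m j * \<omega> (x i \<tau> - x j \<tau>))) \<longlongrightarrow> v i p + (\<Sum>j<N. m j * \<omega> (x i p - x j p))) (at_right p)"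
    by (intro tendsto_add v_right sum_tendsto x_right assms)
  then show ?thesis unfolding psi_def[abs_def] by simp
qed

lemma const_closed_left:
  assumes p: "0 \<le> p" and nc: "\<And>t. p < t \<Longrightarrow> t < q \<Longrightarrow> \<not> collision_time N x t"
    and i: "i < N" and s: "p \<le> s" "s < q"
  shows "psi i s = psi i p"
proof (cases "s = p")
  case True then show ?thesis by simp
next
  case False
  then have ps: "p < s" using s by simp
  have ev: "\<forall>\<^sub>F \<tau> in at_right p. psi i \<tau> = psi i s"
    using eventually_at_right_real[OF ps]
  proof (rule eventually_mono)
    fix \<tau> assume "\<tau> \<in> {p<..<s}"
    then have "psi i s = psi i \<tau>"
      by (intro const_open[OF p nc i]) (use s in auto)
    then show "psi i \<tau> = psi i s" by simp
  qed
  have "((\<lambda>_. psi i s) \<longlongrightarrow> psi i p) (at_right p)"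
    by (rule Lim_transform_eventually[OF psi_right[OF p i] ev])
  then show ?thesis
    using tendsto_unique[OF trivial_limit_at_right_real _ tendsto_const] by metis
qed

lemma next_free:
  "\<exists>q > t. \<forall>s. t < s \<and> s < q \<longrightarrow> \<not> collision_time N x s"
proof -
  let ?D = "{c. collision_time N x c \<and> c > t}"
  have fin: "finite ?D" using finite_subset[OF _ finite_coll] by auto
  show ?thesis
  proof (cases "?D = {}")
    case True then show ?thesis by (intro exI[of _ "t + 1"]) auto
  next
    case False
    have "Min ?D \<in> ?D" using Min_in[OF fin False] .
    moreover have "\<forall>s. t < s \<and> s < Min ?D \<longrightarrow> \<not> collision_time N x s"
      using Min_le[OF fin] by force
    ultimately show ?thesis by blast
  qed
qed

lemma prev_free:
  assumes "a > 0"
  shows "\<exists>s. 0 \<le> s \<and> s < a \<and> (\<forall>u. s < u \<and> u < a \<longrightarrow> \<not> collision_time N x u)"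
proof -
  let ?D = "insert 0 {c. collision_time N x c \<and> c < a}"
  have fin: "finite ?D" using finite_subset[OF _ finite_coll] by auto
  have D: "\<forall>c\<in>?D. c < a" using assms by auto
  have "Max ?D \<in> ?D" using Max_in[OF fin] by blast
  then have lt: "Max ?D < a" using D by blast
  have ge: "0 \<le> Max ?D" using Max_ge[OF fin] by blast
  have "\<forall>u. Max ?D < u \<and> u < a \<longrightarrow> \<not> collision_time N x u"
    using Max_ge[OF fin] by force
  then show ?thesis using lt ge by blast
qed

lemma collision_value:
  assumes ca: "collision_time N x a" and s0: "0 \<le> s0" "s0 < a"
    and nc: "\<And>s. s0 < s \<Longrightarrow> s < a \<Longrightarrow> \<not> collision_time N x s"
    and i: "i < N" and s': "s0 < s'" "s' < a"
  shows "psi i a = (\<Sum>k\<in>cluster N x i a. m k * psi k s') / (\<Sum>k\<in>cluster N x i a. m k)"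
proof -
  obtain l where l: "\<And>j. j < N \<Longrightarrow> (v j \<longlongrightarrow> l j) (at_left a)"
    and vi: "v i a = (\<Sum>j\<in>cluster N x i a. m j * l j) / (\<Sum>j\<in>cluster N x i a. m j)"
    using coll[OF ca] i by blast
  have a0: "a > 0" using ca unfolding collision_time_def by blast
  define S where "S k = (\<Sum>j<N. m j * \<omega> (x k a - x j a))" for k
  have lk: "psi k s' = l k + S k" if k: "k < N" for k
  proof -
    have t: "((\<lambda>\<tau>. v k \<tau> + (\<Sum>j<N. m j * \<omega> (x k \<tau> - x j \<tau>))) \<longlongrightarrow> l k + S k) (at_left a)"
      unfolding S_def by (intro tendsto_add l sum_tendsto x_left a0 k)
    have ev: "\<forall>\<^sub>F \<tau> in at_left a. v k \<tau> + (\<Sum>j<N. m j * \<omega> (x k \<tau> - x j \<tau>)) = psi k s'"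
      using eventually_at_left_real[OF s0(2)]
    proof (rule eventually_mono)
      fix \<tau> assume tau: "\<tau> \<in> {s0<..<a}"
      have "psi k \<tau> = psi k s'"
      proof (cases "\<tau> \<le> s'")
        case True
        have "psi k s' = psi k \<tau>" by (intro const_open[OF s0(1) nc k]) (use True tau s' in auto)
        then show ?thesis by simp
      next
        case False
        show ?thesis by (intro const_open[OF s0(1) nc k]) (use False tau s' in auto)
      qed
      then show "v k \<tau> + (\<Sum>j<N. m j * \<omega> (x k \<tau> - x j \<tau>)) = psi k s'" by (simp add: psi_def)
    qed
    have "((\<lambda>_. psi k s') \<longlongrightarrow> l k + S k) (at_left a)"
      by (rule Lim_transform_eventually[OF t ev])
    then show ?thesis
      using tendsto_unique[OF trivial_limit_at_left_real _ tendsto_const] by metis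
  qed
  define J where "J = cluster N x i a"
  have J: "J \<subseteq> {..<N}" "i \<in> J" "finite J" unfolding J_def cluster_def using i
    by (auto intro: finite_subset[of _ "{..<N}"])
  have SJ: "S k = S i" if "k \<in> J" for k
    using that unfolding J_def cluster_def S_def by auto
  have M: "(\<Sum>k\<in>J. m k) > 0"
    using J m_pos by (intro sum_pos2[of J i]) (auto simp: less_imp_le subset_iff)
  have "(\<Sum>k\<in>J. m k * l k) = (\<Sum>k\<in>J. m k * psi k s') - S i * (\<Sum>k\<in>J. m k)"
  proof -
    have "(\<Sum>k\<in>J. m k * l k) = (\<Sum>k\<in>J. m k * psi k s' - S i * m k)"
    proof (rule sum.cong[OF refl])
      fix k assume k: "k \<in> J"
      then have "k < N" using J by auto
      then have "psi k s' = l k + S i" using lk SJ[OF k] by simp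
      then show "m k * l k = m k * psi k s' - S i * m k" by (simp add: algebra_simps)
    qed
    also have "\<dots> = (\<Sum>k\<in>J. m k * psi k s') - S i * (\<Sum>k\<in>J. m k)"
      by (simp add: sum_subtractf sum_distrib_left)
    finally show ?thesis .
  qed
  then have "psi i a = ((\<Sum>k\<in>J. m k * psi k s') - S i * (\<Sum>k\<in>J. m k)) / (\<Sum>k\<in>J. m k) + S i"
    using vi unfolding psi_def S_def J_def by simp
  also have "\<dots> = (\<Sum>k\<in>J. m k * psi k s') / (\<Sum>k\<in>J. m k)"
    using M by (simp add: field_simps)
  finally show ?thesis unfolding J_def .
qed

end

lemma le_Linf:
  fixes \<omega> :: "real \<Rightarrow> real"
  assumes c: "continuous_on UNIV \<omega>" and bd: "\<And>y. \<bar>\<omega> y\<bar> \<le> W"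
  shows "\<bar>\<omega> y0\<bar> \<le> Linf_norm \<omega>"
proof -
  let ?f = "\<lambda>y. ereal \<bar>\<omega> y\<bar>"
  let ?E = "esssup lborel ?f"
  have "\<omega> \<in> borel_measurable lborel"
    using borel_measurable_continuous_onI[OF c] measurable_lborel2 by simp
  then have meas: "?f \<in> borel_measurable lborel"
    by (intro borel_measurable_ereal borel_measurable_abs)
  have up: "?E \<le> ereal W"
    by (rule esssup_I[OF meas]) (use bd in auto)
  have low: "ereal \<bar>\<omega> y0\<bar> \<le> ?E"
  proof (rule ccontr)
    assume "\<not> ?thesis"
    then have "?E < ereal \<bar>\<omega> y0\<bar>" by simp
    then obtain r where r: "?E < ereal r" "ereal r < ereal \<bar>\<omega> y0\<bar>" using ereal_dense2 by blast
    let ?U = "{y. r < \<bar>\<omega> y\<bar>}"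
    have oU: "open ?U" by (rule open_Collect_less) (intro continuous_intros c)+
    have y0U: "y0 \<in> ?U" using r by simp
    obtain e where e: "e > 0" "ball y0 e \<subseteq> ?U" using open_contains_ball oU y0U by blast
    have "AE y in lborel. ?f y \<le> ?E" by (rule esssup_AE)
    then have "AE y in lborel. y \<notin> {y0 - e<..<y0 + e}"
    proof (rule eventually_mono)
      fix y assume "?f y \<le> ?E"
      then have "ereal \<bar>\<omega> y\<bar> < ereal r" using r(1) by order
      then have "y \<notin> ?U" by simp
      then have "y \<notin> ball y0 e" using e by blast
      then show "y \<notin> {y0 - e<..<y0 + e}" by (auto simp: dist_real_def abs_less_iff)
    qed
    moreover have "(AE y in lborel. y \<notin> {y0 - e<..<y0 + e}) = (emeasure lborel {y0 - e<..<y0 + e} = 0)"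
      by (rule AE_iff_measurable) auto
    ultimately have "emeasure lborel {y0 - e<..<y0 + e} = 0" by simp
    moreover have "emeasure lborel {y0 - e<..<y0 + e} = ennreal (2 * e)" using e by simp
    ultimately show False using e by simp
  qed
  obtain w where "?E = ereal w" using up low by (cases ?E) auto
  then show ?thesis using low unfolding Linf_norm_def by simp
qed

context scs
begin

lemma psi_bounds:
  assumes "0 \<le> t" "i < N"
  shows "Min ((\<lambda>i. psi i 0) ` {..<N}) \<le> psi i t \<and> psi i t \<le> Max ((\<lambda>i. psi i 0) ` {..<N})"
proof -
  let ?lo = "Min ((\<lambda>i. psi i 0) ` {..<N})"
  let ?hi = "Max ((\<lambda>i. psi i 0) ` {..<N})"
  let ?cnt = "\<lambda>t. card {c. collision_time N x c \<and> c \<le> t}"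
  have fin: "\<And>t. finite {c. collision_time N x c \<and> c \<le> t}"
    using finite_subset[OF _ finite_coll] by auto
  have base: "?lo \<le> psi k 0 \<and> psi k 0 \<le> ?hi" if "k < N" for k
    using that by (auto intro!: Min_le Max_ge)
  have "\<forall>t i. 0 \<le> t \<longrightarrow> i < N \<longrightarrow> ?cnt t = n \<longrightarrow> ?lo \<le> psi i t \<and> psi i t \<le> ?hi" for n
  proof (induction n rule: less_induct)
    case (less n)
    show ?case
    proof (intro allI impI)
      fix t i assume t: "0 \<le> t" and i: "i < N" and cn: "?cnt t = n"
      let ?A = "{c. collision_time N x c \<and> c \<le> t}"
      obtain q where q: "t < q" "\<forall>s. t < s \<and> s < q \<longrightarrow> \<not> collision_time N x s"
        using next_free by blast
      show "?lo \<le> psi i t \<and> psi i t \<le> ?hi"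
      proof (cases "?A = {}")
        case True
        have nc: "\<not> collision_time N x s" if "0 < s" "s < q" for s
          using True q that by (cases "s \<le> t") auto
        have "psi i t = psi i 0"
          by (rule const_closed_left[OF order_refl nc i t q(1)])
        then show ?thesis using base[OF i] by simp
      next
        case False
        define a where "a = Max ?A"
        have aA: "a \<in> ?A" using Max_in[OF fin False] a_def by simp
        then have ca: "collision_time N x a" "a \<le> t" by auto
        have a0: "a > 0" using ca(1) unfolding collision_time_def by blast
        have nc: "\<not> collision_time N x s" if "a < s" "s < q" for s
        proof
          assume cs: "collision_time N x s"
          show False
          proof (cases "s \<le> t")
            case True
            then have "s \<in> ?A" using cs by simp
            then have "s \<le> a" unfolding a_def using Max_ge[OF fin] by blast
            then show False using that by simp
          next
            case False
            then show False using q cs that by auto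
          qed
        qed
        have eq1: "psi i t = psi i a"
          by (rule const_closed_left[OF _ nc i ca(2) q(1)]) (use a0 in simp)
        obtain s0 where s0: "0 \<le> s0" "s0 < a" "\<forall>u. s0 < u \<and> u < a \<longrightarrow> \<not> collision_time N x u"
          using prev_free[OF a0] by blast
        define s' where "s' = (s0 + a) / 2"
        have s': "s0 < s'" "s' < a" using s0 unfolding s'_def by auto
        have sub: "{c. collision_time N x c \<and> c \<le> s'} \<subset> ?A"
        proof
          show "{c. collision_time N x c \<and> c \<le> s'} \<subseteq> ?A" using s' ca by auto
          show "{c. collision_time N x c \<and> c \<le> s'} \<noteq> ?A"
          proof
            assume "{c. collision_time N x c \<and> c \<le> s'} = ?A"
            then have "a \<in> {c. collision_time N x c \<and> c \<le> s'}" using aA by simp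
            then show False using s' by simp
          qed
        qed
        have lt: "?cnt s' < n" using psubset_card_mono[OF fin sub] cn by simp
        have IH: "?lo \<le> psi k s' \<and> psi k s' \<le> ?hi" if "k < N" for k
          using less.IH[OF lt] s' s0 that by auto
        define J where "J = cluster N x i a"
        have J: "J \<subseteq> {..<N}" "i \<in> J" "finite J" unfolding J_def cluster_def using i
          by (auto intro: finite_subset[of _ "{..<N}"])
        have M: "(\<Sum>k\<in>J. m k) > 0"
          using J m_pos by (intro sum_pos2[of J i]) (auto simp: less_imp_le subset_iff)
        have pa: "psi i a = (\<Sum>k\<in>J. m k * psi k s') / (\<Sum>k\<in>J. m k)"
          unfolding J_def by (rule collision_value[OF ca(1) s0(1,2) _ i s']) (use s0(3) in auto)
        have mk: "k \<in> J \<Longrightarrow> 0 \<le> m k" for k using J m_pos by (auto simp: less_imp_le subset_iff)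
        have "?lo * (\<Sum>k\<in>J. m k) = (\<Sum>k\<in>J. m k * ?lo)" by (simp add: sum_distrib_right mult.commute)
        also have "\<dots> \<le> (\<Sum>k\<in>J. m k * psi k s')"
          using IH J mk by (intro sum_mono mult_left_mono) auto
        finally have l1: "?lo * (\<Sum>k\<in>J. m k) \<le> (\<Sum>k\<in>J. m k * psi k s')" .
        have "(\<Sum>k\<in>J. m k * psi k s') \<le> (\<Sum>k\<in>J. m k * ?hi)"
          using IH J mk by (intro sum_mono mult_left_mono) auto
        also have "\<dots> = ?hi * (\<Sum>k\<in>J. m k)" by (simp add: sum_distrib_right mult.commute)
        finally have l2: "(\<Sum>k\<in>J. m k * psi k s') \<le> ?hi * (\<Sum>k\<in>J. m k)" .
        have "?lo \<le> psi i a" unfolding pa using l1 M by (simp add: pos_le_divide_eq)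
        moreover have "psi i a \<le> ?hi" unfolding pa using l2 M by (simp add: pos_divide_le_eq)
        ultimately show ?thesis using eq1 by simp
      qed
    qed
  qed
  then show ?thesis using assms by blast
qed

lemma x_bound:
  assumes t: "0 \<le> t" and i: "i < N" and vb: "\<And>\<tau>. 0 \<le> \<tau> \<Longrightarrow> \<bar>v i \<tau>\<bar> \<le> Mt"
  shows "\<bar>x i t - x i 0\<bar> \<le> Mt * t"
proof -
  have "(v i has_integral x i t - x i 0) {0..t}"
  proof (rule fundamental_theorem_of_calculus_interior_strong[OF finite_coll t])
    fix \<tau> assume tau: "\<tau> \<in> {0<..<t} - {t. collision_time N x t}"
    then have "(x i has_real_derivative v i \<tau>) (at \<tau> within {0..})"
      using derivs(1)[OF _ _ i, of \<tau>] by auto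
    moreover have "at \<tau> within {0..} = at \<tau>"
      using tau by (intro at_within_interior) (simp add: interior_real_atLeast)
    ultimately show "(x i has_vector_derivative v i \<tau>) (at \<tau>)"
      by (simp add: has_real_derivative_iff_has_vector_derivative)
  next
    show "continuous_on {0..t} (x i)" by (rule continuous_on_subset[OF xcont[OF i]]) auto
  qed
  moreover have "0 \<le> Mt" using vb[of 0] by simp
  ultimately have "norm (x i t - x i 0) \<le> Mt * Henstock_Kurzweil_Integration.content {0..t}"
    using vb by (intro has_integral_bound_real[where S="{}"]) auto
  then show ?thesis using t by simp
qed

end

theorem proposition2p2:
  fixes \<omega> \<phi> :: "real \<Rightarrow> real" and N :: nat and m x0 v0 :: "nat \<Rightarrow> real"
    and x v :: "nat \<Rightarrow> real \<Rightarrow> real" and R0 :: real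
  assumes omega_nonneg: "\<forall>y. \<omega> y \<ge> 0"
    and omega_int: "integrable lborel \<omega>"
    and omega_mass: "integral\<^sup>L lborel \<omega> = 1"
    and omega_bdd: "bounded (range \<omega>)"
    and phi_meas: "\<phi> \<in> borel_measurable lborel"
    and phi_int: "integrable lborel \<phi>"
    and phi_bdd: "bounded (range \<phi>)"
    and phi_deriv: "\<forall>a b. a \<le> b \<longrightarrow> (\<phi> has_integral (\<omega> b - \<omega> a)) {a..b}"
    and m_pos: "\<forall>i<N. m i > 0"
    and m_sum: "(\<Sum>i<N. m i) = 1"
    and x0_ord: "\<forall>i. Suc i < N \<longrightarrow> x0 i \<le> x0 (Suc i)"
    and sol: "sticky_CS \<phi> N m x0 v0 x v"
  defines "\<psi>0 \<equiv> (\<lambda>i. v0 i + (\<Sum>j<N. m j * \<omega> (x0 i - x0 j)))"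
    and "\<psi> \<equiv> (\<lambda>i t. v i t + (\<Sum>j<N. m j * \<omega> (x i t - x j t)))"
  shows "let \<psi>lo = Min (\<psi>0 ` {..<N}); \<psi>hi = Max (\<psi>0 ` {..<N});
             Mt = max \<bar>\<psi>lo - Linf_norm \<omega>\<bar> \<bar>\<psi>hi\<bar> in
         (\<forall>i<N. \<forall>t\<ge>0. \<psi> i t \<in> {\<psi>lo..\<psi>hi} \<and>
              \<psi>lo - Linf_norm \<omega> \<le> v i t \<and> v i t \<le> \<psi>hi)
         \<and> ((\<forall>i<N. x0 i \<in> {-R0..R0}) \<longrightarrow>
              (\<forall>t\<ge>0. \<forall>i<N. x i t \<in> {-(R0 + t * Mt)..R0 + t * Mt}))"
proof -
  obtain B where B: "\<And>z. \<bar>\<phi> z\<bar> \<le> B"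
    using phi_bdd unfolding bounded_iff by (metis UNIV_I image_eqI real_norm_def)
  obtain W where W: "\<And>z. \<bar>\<omega> z\<bar> \<le> W"
    using omega_bdd unfolding bounded_iff by (metis UNIV_I image_eqI real_norm_def)
  have phim: "\<phi> \<in> borel_measurable borel" using phi_meas measurable_lborel2 by simp
  interpret scs \<omega> \<phi> N m x0 v0 x v B
  proof
    show "\<And>z. \<bar>\<phi> z\<bar> \<le> B" by (rule B)
    show "\<phi> \<in> borel_measurable borel" by (rule phim)
    show "\<And>a b. a \<le> b \<Longrightarrow> (\<phi> has_integral \<omega> b - \<omega> a) {a..b}" using phi_deriv by blast
    show "\<And>i. i < N \<Longrightarrow> 0 < m i" using m_pos by blast
    show "sticky_CS \<phi> N m x0 v0 x v" by (rule sol)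
  qed
  have psi0: "\<psi>0 ` {..<N} = (\<lambda>i. psi i 0) ` {..<N}"
    unfolding \<psi>0_def psi_def using init by (intro image_cong) auto
  have psieq: "\<psi> i t = psi i t" for i t unfolding \<psi>_def psi_def by simp
  define lo where "lo = Min (\<psi>0 ` {..<N})"
  define hi where "hi = Max (\<psi>0 ` {..<N})"
  define L where "L = Linf_norm \<omega>"
  define Mt where "Mt = max \<bar>lo - L\<bar> \<bar>hi\<bar>"
  have sum_nn: "0 \<le> (\<Sum>j<N. m j * \<omega> (x i t - x j t))" for i t
    using m_pos omega_nonneg by (intro sum_nonneg mult_nonneg_nonneg) (auto simp: less_imp_le)
  have sum_le: "(\<Sum>j<N. m j * \<omega> (x i t - x j t)) \<le> L" for i t
  proof -
    have "(\<Sum>j<N. m j * \<omega> (x i t - x j t)) \<le> (\<Sum>j<N. m j * L)"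
    proof (intro sum_mono mult_left_mono)
      fix j assume "j \<in> {..<N}"
      then show "0 \<le> m j" using m_pos by (simp add: less_imp_le)
      have "\<bar>\<omega> (x i t - x j t)\<bar> \<le> L" unfolding L_def by (rule le_Linf[OF \<omega>cont W])
      then show "\<omega> (x i t - x j t) \<le> L" by simp
    qed
    also have "\<dots> = L" using m_sum by (simp add: sum_distrib_right[symmetric])
    finally show ?thesis .
  qed
  have part1: "\<forall>i<N. \<forall>t\<ge>0. \<psi> i t \<in> {lo..hi} \<and> lo - L \<le> v i t \<and> v i t \<le> hi"
  proof (intro allI impI)
    fix i and t :: real assume i: "i < N" and t: "0 \<le> t"
    have b: "lo \<le> psi i t" "psi i t \<le> hi"
      using psi_bounds[OF t i] unfolding lo_def hi_def psi0 by auto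
    have "lo - L \<le> v i t" using b(1) sum_le[of i t] unfolding psi_def by simp
    moreover have "v i t \<le> hi" using b(2) sum_nn[of i t] unfolding psi_def by simp
    ultimately show "\<psi> i t \<in> {lo..hi} \<and> lo - L \<le> v i t \<and> v i t \<le> hi"
      using b psieq by simp
  qed
  have part2: "(\<forall>i<N. x0 i \<in> {-R0..R0}) \<longrightarrow> (\<forall>t\<ge>0. \<forall>i<N. x i t \<in> {-(R0 + t * Mt)..R0 + t * Mt})"
  proof (intro impI allI)
    fix t :: real and i assume x0b: "\<forall>i<N. x0 i \<in> {-R0..R0}" and t: "0 \<le> t" and i: "i < N"
    have vb: "\<bar>v i \<tau>\<bar> \<le> Mt" if "0 \<le> \<tau>" for \<tau>
      using part1 i that unfolding Mt_def by fastforce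
    have "\<bar>x i t - x i 0\<bar> \<le> Mt * t" by (rule x_bound[OF t i vb])
    moreover have "x i 0 = x0 i" using init[OF i] by simp
    moreover have "\<bar>x0 i\<bar> \<le> R0" using x0b i by auto
    ultimately show "x i t \<in> {-(R0 + t * Mt)..R0 + t * Mt}" by (auto simp: abs_le_iff mult.commute)
  qed
  show ?thesis
    unfolding Let_def lo_def[symmetric] hi_def[symmetric] L_def[symmetric] Mt_def[symmetric]
    using part1 part2 by blast
qed

end
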